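(* Let $Z\in\mathfrak X_S$ be as in the setup with $A=-2C$. Let $\gamma$ be a symmetric crossing periodic orbit whose crossing points with $\Sigma$ are $p_0=(x_0,y_0,0)$ and $p_1=(-y_0,-x_0,0)$, with $x_0y_0\neq 0$. Then its saltation-corrected monodromy matrix $M$ satisfies $$\det(M)=\Big(\frac{y_0}{x_0}\Big)^2.$$
   Context: Setup. Fix real parameters $A\neq 0$, $C$, $H$, $\Lambda$. Let $\Sigma=\{z=0\}$. Define $$X(x,y,z)=\big(Ax-H(((A-C)^2+1)z-\Lambda),\ \Lambda-(1+C^2)z,\ y+2Cz\big),$$ $$Y(x,y,z)=\big(-\Lambda-(1+C^2)z,\ Ay-H(((A-C)^2+1)z+\Lambda),\ x+2Cz\big).$$ $Z$ equals $X$ on $\{z\ge0\}$ and $Y$ on $\{z<0\}$ (family $\mathfrak X_S$, equivariant under $S(x,y,z)=(-y,-x,-z)$). On $\Sigma$, $X_3=y$ and $Y_3=x$. The periodic orbit runs from $p_0$ to $p_1$ along $X$ in time $t_X$, and from $p_1$ back to $p_0$ along $Y$ in time $t_Y$. Its saltation-corrected monodromy matrix is $$M=S_{Y\to X}(p_0)\,e^{DY t_Y}\,S_{X\to Y}(p_1)\,e^{DX t_X},$$ where $e_3=(0,0,1)^T$ and $$S_{X\to Y}(p)=I+\frac{(Y(p)-X(p))e_3^T}{X_3(p)},\qquad S_{Y\to X}(p)=I-\frac{(Y(p)-X(p))e_3^T}{Y_3(p)}.$$ *)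

theory Defs
  imports "HOL-Analysis.Analysis"
begin

definition Xf :: "real \<Rightarrow> real \<Rightarrow> real \<Rightarrow> real \<Rightarrow> real^3 \<Rightarrow> real^3" where
  "Xf A C H L p = vector [A * p$1 - H * (((A - C)^2 + 1) * p$3 - L),
                          L - (1 + C^2) * p$3,
                          p$2 + 2 * C * p$3]"

definition Yf :: "real \<Rightarrow> real \<Rightarrow> real \<Rightarrow> real \<Rightarrow> real^3 \<Rightarrow> real^3" where
  "Yf A C H L p = vector [- L - (1 + C^2) * p$3,
                          A * p$2 - H * (((A - C)^2 + 1) * p$3 + L),
                          p$1 + 2 * C * p$3]"

definition DX :: "real \<Rightarrow> real \<Rightarrow> real \<Rightarrow> real^3^3" where
  "DX A C H = vector [vector [A, 0, - H * ((A - C)^2 + 1)],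
                      vector [0, 0, - (1 + C^2)],
                      vector [0, 1, 2 * C]]"

definition DY :: "real \<Rightarrow> real \<Rightarrow> real \<Rightarrow> real^3^3" where
  "DY A C H = vector [vector [0, 0, - (1 + C^2)],
                      vector [0, A, - H * ((A - C)^2 + 1)],
                      vector [1, 0, 2 * C]]"

fun mpow :: "real^3^3 \<Rightarrow> nat \<Rightarrow> real^3^3" where
  "mpow M 0 = mat 1"
| "mpow M (Suc n) = M ** mpow M n"

definition mexp :: "real^3^3 \<Rightarrow> real^3^3" where
  "mexp M = (\<Sum>n. (1 / fact n) *\<^sub>R mpow M n)"

definition e3 :: "real^3" where "e3 = axis 3 1"

definition outer :: "real^3 \<Rightarrow> real^3 \<Rightarrow> real^3^3" where
  "outer u v = (\<chi> i j. u$i * v$j)"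

definition SaltXY :: "real \<Rightarrow> real \<Rightarrow> real \<Rightarrow> real \<Rightarrow> real^3 \<Rightarrow> real^3^3" where
  "SaltXY A C H L p = mat 1 + (1 / (Xf A C H L p)$3) *\<^sub>R outer (Yf A C H L p - Xf A C H L p) e3"

definition SaltYX :: "real \<Rightarrow> real \<Rightarrow> real \<Rightarrow> real \<Rightarrow> real^3 \<Rightarrow> real^3^3" where
  "SaltYX A C H L p = mat 1 - (1 / (Yf A C H L p)$3) *\<^sub>R outer (Yf A C H L p - Xf A C H L p) e3"

definition monodromy :: "real \<Rightarrow> real \<Rightarrow> real \<Rightarrow> real \<Rightarrow> real^3 \<Rightarrow> real^3 \<Rightarrow> real \<Rightarrow> real \<Rightarrow> real^3^3" where
  "monodromy A C H L p0 p1 tX tY =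
     SaltYX A C H L p0 ** mexp (tY *\<^sub>R DY A C H) ** SaltXY A C H L p1 ** mexp (tX *\<^sub>R DX A C H)"

end

theory Submission
  imports Defs
begin

lemma mpow_scale: "mpow (t *\<^sub>R N) n = t^n *\<^sub>R mpow N n"
proof (induction n)
  case 0 then show ?case by simp
next
  case (Suc n)
  show ?case using Suc
    by (simp add: vec_eq_iff matrix_matrix_mult_def sum_distrib_left mult_ac)
qed

lemma mpow_bound:
  fixes N :: "real^3^3"
  shows "\<bar>mpow N n $ i $ j\<bar> \<le> (\<Sum>a\<in>UNIV. \<Sum>b\<in>UNIV. \<bar>N$a$b\<bar>) ^ n"
proof (induction n arbitrary: i j)
  case 0 then show ?case by (simp add: mat_def)
next
  case (Suc n)
  define K where "K = (\<Sum>a\<in>UNIV. \<Sum>b\<in>UNIV. \<bar>N$a$b\<bar>)"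
  have rowK: "(\<Sum>k\<in>UNIV. \<bar>N$i$k\<bar>) \<le> K"
    unfolding K_def by (rule member_le_sum[where f="\<lambda>a. \<Sum>b\<in>UNIV. \<bar>N$a$b\<bar>"]) (auto intro: sum_nonneg)
  have "\<bar>mpow N (Suc n) $ i $ j\<bar> = \<bar>\<Sum>k\<in>UNIV. N$i$k * mpow N n $ k $ j\<bar>"
    by (simp add: matrix_matrix_mult_def)
  also have "\<dots> \<le> (\<Sum>k\<in>UNIV. \<bar>N$i$k\<bar> * \<bar>mpow N n $ k $ j\<bar>)"
    by (rule order_trans[OF sum_abs]) (simp add: abs_mult)
  also have "\<dots> \<le> (\<Sum>k\<in>UNIV. \<bar>N$i$k\<bar> * K^n)"
    using Suc unfolding K_def by (intro sum_mono mult_left_mono) auto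
  also have "\<dots> = (\<Sum>k\<in>UNIV. \<bar>N$i$k\<bar>) * K^n" by (simp add: sum_distrib_right)
  also have "\<dots> \<le> K * K^n"
    using rowK by (intro mult_right_mono) (auto simp: K_def intro!: zero_le_power sum_nonneg)
  finally show ?case by (simp add: K_def)
qed

lemma norm_mat_le: "norm (x::real^3^3) \<le> (\<Sum>a\<in>UNIV. \<Sum>b\<in>UNIV. \<bar>x$a$b\<bar>)"
proof -
  have "norm x \<le> (\<Sum>a\<in>UNIV. norm (x$a))"
    by (simp add: norm_vec_def L2_set_le_sum)
  also have "\<dots> \<le> (\<Sum>a\<in>UNIV. \<Sum>b\<in>UNIV. \<bar>x$a$b\<bar>)"
    by (intro sum_mono norm_le_l1_cart)
  finally show ?thesis .
qed

lemma summable_mexp: "summable (\<lambda>n. (1 / fact n) *\<^sub>R mpow (M::real^3^3) n)"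
proof -
  define K where "K = (\<Sum>a\<in>UNIV. \<Sum>b\<in>UNIV. \<bar>M$a$b\<bar>)"
  have "norm ((1 / fact n) *\<^sub>R mpow M n) \<le> 9 * (inverse (fact n) * K^n)" for n
  proof -
    have "norm ((1 / fact n) *\<^sub>R mpow M n) = (1 / fact n) * norm (mpow M n)" by simp
    also have "\<dots> \<le> (1 / fact n) * (\<Sum>a\<in>UNIV. \<Sum>b\<in>UNIV. \<bar>mpow M n$a$b\<bar>)"
      by (intro mult_left_mono norm_mat_le) auto
    also have "\<dots> \<le> (1 / fact n) * (\<Sum>a\<in>(UNIV::3 set). \<Sum>b\<in>(UNIV::3 set). K^n)"
      unfolding K_def by (intro mult_left_mono sum_mono mpow_bound) auto
    also have "\<dots> = 9 * (inverse (fact n) * K^n)" by (simp add: divide_inverse)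
    finally show ?thesis .
  qed
  moreover have "summable (\<lambda>n. 9 * (inverse (fact n) * K^n))"
    by (intro summable_mult summable_exp)
  ultimately show ?thesis by (rule summable_comparison_test'[where N=0, rotated])
qed

lemma mexp_entry: "mexp M $ i $ j = (\<Sum>n. (1 / fact n) * mpow M n $ i $ j)"
proof -
  have "(\<lambda>n. (1 / fact n) *\<^sub>R mpow M n) sums mexp M"
    unfolding mexp_def using summable_mexp by (rule summable_sums)
  then have "(\<lambda>n. ((1 / fact n) *\<^sub>R mpow M n) $ i $ j) sums (mexp M $ i $ j)"
    by (intro sums_vec_nth)
  then show ?thesis by (simp add: sums_iff)
qed

lemma coef_summable:
  fixes N :: "real^3^3"
  shows "summable (\<lambda>n. (mpow N n $ i $ j / fact n) * y^n)"
proof -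
  define K where "K = (\<Sum>a\<in>UNIV. \<Sum>b\<in>UNIV. \<bar>N$a$b\<bar>)"
  have "norm ((mpow N n $ i $ j / fact n) * y^n) \<le> inverse (fact n) * (K * \<bar>y\<bar>)^n" for n
  proof -
    have "norm ((mpow N n $ i $ j / fact n) * y^n) = inverse (fact n) * (\<bar>mpow N n $ i $ j\<bar> * \<bar>y\<bar>^n)"
      by (simp add: abs_mult power_abs divide_inverse)
    also have "\<dots> \<le> inverse (fact n) * (K^n * \<bar>y\<bar>^n)"
      unfolding K_def by (intro mult_left_mono mult_right_mono mpow_bound) auto
    finally show ?thesis by (simp add: power_mult_distrib)
  qed
  then show ?thesis by (rule summable_comparison_test'[where N=0, OF summable_exp]) 
qed

lemma mexp_scale_entry: "mexp (t *\<^sub>R N) $ i $ j = (\<Sum>n. (mpow N n $ i $ j / fact n) * t^n)"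
  by (simp add: mexp_entry mpow_scale) (simp add: mult_ac)

lemma mexp_entry_deriv:
  fixes N :: "real^3^3"
  shows "((\<lambda>t. mexp (t *\<^sub>R N) $ i $ j) has_real_derivative
           (\<Sum>k\<in>UNIV. N$i$k * mexp (t *\<^sub>R N) $ k $ j)) (at t)"
proof -
  let ?c = "\<lambda>i j n. mpow N n $ i $ j / fact n"
  have d: "((\<lambda>t. \<Sum>n. ?c i j n * t^n) has_real_derivative (\<Sum>n. diffs (?c i j) n * t^n)) (at t)"
    by (rule termdiffs_strong_converges_everywhere) (rule coef_summable)
  have "diffs (?c i j) n * t^n = (\<Sum>k\<in>UNIV. N$i$k * (?c k j n * t^n))" for n
  proof -
    have "diffs (?c i j) n = real (Suc n) * mpow N (Suc n) $ i $ j / (real (Suc n) * fact n)"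
      by (simp add: diffs_def del: mpow.simps of_nat_Suc)
    also have "\<dots> = mpow N (Suc n) $ i $ j / fact n"
      by (rule nonzero_mult_divide_mult_cancel_left) simp
    also have "\<dots> = (\<Sum>k\<in>UNIV. N$i$k * ?c k j n)"
      by (simp add: matrix_matrix_mult_def sum_divide_distrib)
    finally show ?thesis by (simp add: sum_distrib_right sum_distrib_left mult_ac)
  qed
  then have "(\<Sum>n. diffs (?c i j) n * t^n) = (\<Sum>n. \<Sum>k\<in>UNIV. N$i$k * (?c k j n * t^n))"
    by simp
  also have "\<dots> = (\<Sum>k\<in>UNIV. \<Sum>n. N$i$k * (?c k j n * t^n))"
    by (intro suminf_sum summable_mult coef_summable)
  also have "\<dots> = (\<Sum>k\<in>UNIV. N$i$k * mexp (t *\<^sub>R N) $ k $ j)"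
    by (intro sum.cong refl) (simp only: suminf_mult[OF coef_summable] mexp_scale_entry)
  finally show ?thesis using d by (simp add: mexp_scale_entry)
qed

lemma det_mexp:
  fixes N :: "real^3^3"
  assumes tr: "N$1$1 + N$2$2 + N$3$3 = 0"
  shows "det (mexp (t *\<^sub>R N)) = 1"
proof -
  define g where "g i j t = mexp (t *\<^sub>R N) $ i $ j" for i j t
  have D: "(g i j has_real_derivative (N$i$1 * g 1 j t + N$i$2 * g 2 j t + N$i$3 * g 3 j t)) (at t)" for i j t
    unfolding g_def using mexp_entry_deriv[of N i j t] by (simp add: sum_3)
  define f where "f t =
    g 1 1 t * g 2 2 t * g 3 3 t +
    g 1 2 t * g 2 3 t * g 3 1 t +
    g 1 3 t * g 2 1 t * g 3 2 t -
    g 1 1 t * g 2 3 t * g 3 2 t -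
    g 1 2 t * g 2 1 t * g 3 3 t -
    g 1 3 t * g 2 2 t * g 3 1 t" for t
  have N33: "N$3$3 = - N$1$1 - N$2$2" using tr by simp
  have fd: "(f has_real_derivative 0) (at t)" for t
    unfolding f_def[abs_def]
    apply (rule derivative_eq_intros D refl)+
    apply (simp only: N33)
    apply algebra
    done
  have g0: "g i j 0 = mat 1 $ i $ j" for i j
    unfolding g_def mexp_scale_entry powser_zero by simp
  have "f t = f 0" using fd by (metis DERIV_isconst_all)
  also have "f 0 = 1" unfolding f_def g0 by (simp add: mat_def)
  finally show ?thesis by (simp add: det_3 f_def g_def)
qed

theorem mainTheorem9:
  fixes A C H L x0 y0 tX tY :: real and \<gamma>X \<gamma>Y :: "real \<Rightarrow> real^3"
  assumes "A \<noteq> 0" and "A = - 2 * C" and "x0 * y0 \<noteq> 0"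
    and "tX > 0" and "tY > 0"
    and "\<And>t. t \<in> {0..tX} \<Longrightarrow>
           (\<gamma>X has_vector_derivative Xf A C H L (\<gamma>X t)) (at t within {0..tX})"
    and "\<And>t. t \<in> {0<..<tX} \<Longrightarrow> \<gamma>X t $ 3 > 0"
    and "\<gamma>X 0 = vector [x0, y0, 0]" and "\<gamma>X tX = vector [- y0, - x0, 0]"
    and "\<And>t. t \<in> {0..tY} \<Longrightarrow>
           (\<gamma>Y has_vector_derivative Yf A C H L (\<gamma>Y t)) (at t within {0..tY})"
    and "\<And>t. t \<in> {0<..<tY} \<Longrightarrow> \<gamma>Y t $ 3 < 0"
    and "\<gamma>Y 0 = vector [- y0, - x0, 0]" and "\<gamma>Y tY = vector [x0, y0, 0]"
  shows "det (monodromy A C H L (vector [x0, y0, 0]) (vector [- y0, - x0, 0]) tX tY)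
           = (y0 / x0)^2"
proof -
  have x0: "x0 \<noteq> 0" and y0: "y0 \<noteq> 0" using assms(3) by auto
  have eX: "det (mexp (tX *\<^sub>R DX A C H)) = 1"
    by (rule det_mexp) (simp add: DX_def assms(2))
  have eY: "det (mexp (tY *\<^sub>R DY A C H)) = 1"
    by (rule det_mexp) (simp add: DY_def assms(2))
  have s1: "det (SaltYX A C H L (vector [x0, y0, 0])) = y0 / x0"
    using x0 by (simp add: SaltYX_def Xf_def Yf_def outer_def e3_def det_3 mat_def axis_def field_simps)
  have s2: "det (SaltXY A C H L (vector [- y0, - x0, 0])) = y0 / x0"
    using x0 by (simp add: SaltXY_def Xf_def Yf_def outer_def e3_def det_3 mat_def axis_def field_simps)
  show ?thesis
    by (simp add: monodromy_def det_mul eX eY s1 s2 power2_eq_square)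
qed

end
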